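(* Let $p < q$ be primes with $p, q \geq 3$ and $n = pq$. Then the total graph $T(\Gamma(\mathbb{Z}_n))$ is very cost effective.
   Context: $\mathbb{Z}_n$ is the ring of residue classes modulo $n$. The zero-divisor graph $\Gamma(\mathbb{Z}_n)$ has as vertices the nonzero zero-divisors of $\mathbb{Z}_n$, two distinct vertices being adjacent iff their product is $0$. The total graph $T(G)$ of a graph $G$ has vertex set $V(G)\cup E(G)$, with two vertices adjacent iff they are adjacent vertices of $G$, adjacent edges of $G$ (sharing an endpoint), or a vertex and an edge of $G$ incident to each other. For a graph $H=(V,E)$ and $S\subseteq V$, a vertex $v\in S$ is very cost effective if $|N(v)\cap S| < |N(v)\cap (V\setminus S)|$; $S$ is very cost effective if every vertex of $S$ is. A bipartition $\{S, V\setminus S\}$ is very cost effective if both parts are very cost effective, and $H$ is very cost effective if it has a very cost effective bipartition. *)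

theory Defs
  imports "HOL-Computational_Algebra.Primes"
begin

type_synonym 'a ugraph = "'a set \<times> 'a set set"

definition verts :: "'a ugraph \<Rightarrow> 'a set" where "verts G = fst G"
definition edges :: "'a ugraph \<Rightarrow> 'a set set" where "edges G = snd G"

text \<open>Zero-divisor graph of Z_n, residues represented by 0..n-1.\<close>
definition zd_verts :: "nat \<Rightarrow> nat set" where
  "zd_verts n = {x. 0 < x \<and> x < n \<and> (\<exists>y. 0 < y \<and> y < n \<and> (x * y) mod n = 0)}"

definition zero_divisor_graph :: "nat \<Rightarrow> nat ugraph" where
  "zero_divisor_graph n =
     (zd_verts n,
      {{x, y} | x y. x \<in> zd_verts n \<and> y \<in> zd_verts n \<and> x \<noteq> y \<and> (x * y) mod n = 0})"

definition total_graph :: "'a ugraph \<Rightarrow> ('a + 'a set) ugraph" where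
  "total_graph G =
     (Inl ` verts G \<union> Inr ` edges G,
      {{Inl u, Inl v} | u v. {u, v} \<in> edges G \<and> u \<noteq> v}
      \<union> {{Inr e, Inr f} | e f. e \<in> edges G \<and> f \<in> edges G \<and> e \<noteq> f \<and> e \<inter> f \<noteq> {}}
      \<union> {{Inl v, Inr e} | v e. e \<in> edges G \<and> v \<in> e})"

definition nbhd :: "'a ugraph \<Rightarrow> 'a \<Rightarrow> 'a set" where
  "nbhd G v = {w \<in> verts G. {v, w} \<in> edges G \<and> v \<noteq> w}"

definition very_cost_effective_vertex :: "'a ugraph \<Rightarrow> 'a set \<Rightarrow> 'a \<Rightarrow> bool" where
  "very_cost_effective_vertex G S v \<longleftrightarrow>
     card (nbhd G v \<inter> S) < card (nbhd G v \<inter> (verts G - S))"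

definition very_cost_effective_set :: "'a ugraph \<Rightarrow> 'a set \<Rightarrow> bool" where
  "very_cost_effective_set G S \<longleftrightarrow> (\<forall>v\<in>S. very_cost_effective_vertex G S v)"

definition very_cost_effective_bipartition :: "'a ugraph \<Rightarrow> 'a set \<Rightarrow> bool" where
  "very_cost_effective_bipartition G S \<longleftrightarrow>
     S \<subseteq> verts G \<and> very_cost_effective_set G S \<and> very_cost_effective_set G (verts G - S)"

definition very_cost_effective_graph :: "'a ugraph \<Rightarrow> bool" where
  "very_cost_effective_graph G \<longleftrightarrow> (\<exists>S. very_cost_effective_bipartition G S)"

end

theory Submission
  imports Defs
begin

lemma TL1: "{Inl u, Inl w} \<in> edges (total_graph G) \<longleftrightarrow> u \<noteq> w \<and> {u,w} \<in> edges G"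
  unfolding total_graph_def edges_def by (auto simp: doubleton_eq_iff insert_commute)

lemma TL2: "{Inl u, Inr e} \<in> edges (total_graph G) \<longleftrightarrow> e \<in> edges G \<and> u \<in> e"
  unfolding total_graph_def edges_def by (auto simp: doubleton_eq_iff)

lemma TL3: "{Inr e, Inr f} \<in> edges (total_graph G) \<longleftrightarrow> e \<in> edges G \<and> f \<in> edges G \<and> e \<noteq> f \<and> e \<inter> f \<noteq> {}"
  unfolding total_graph_def edges_def by (auto simp: doubleton_eq_iff)

lemma TV: "verts (total_graph G) = Inl ` verts G \<union> Inr ` edges G"
  unfolding total_graph_def verts_def edges_def by simp

definition bip :: "'a set \<Rightarrow> 'a set \<Rightarrow> 'a ugraph" where
 "bip A B = (A \<union> B, {{x,y}|x y. x\<in>A \<and> y\<in>B})"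

lemma bipV: "verts (bip A B) = A \<union> B" by (simp add: bip_def verts_def)
lemma bipE: "edges (bip A B) = {{x,y}|x y. x\<in>A \<and> y\<in>B}" by (simp add: bip_def edges_def)

lemma bipE2: assumes "A \<inter> B = {}" shows "{u,w} \<in> edges (bip A B) \<longleftrightarrow> (u\<in>A \<and> w\<in>B) \<or> (u\<in>B \<and> w\<in>A)"
  using assms unfolding bipE by (auto simp: doubleton_eq_iff)

lemma TL2': "{Inr e, Inl u} \<in> edges (total_graph G) \<longleftrightarrow> e \<in> edges G \<and> u \<in> e"
  by (simp add: insert_commute TL2)

lemma memV_l: "Inl v \<in> Inl ` X \<union> Inr ` Y \<longleftrightarrow> v \<in> X" by auto
lemma memV_r: "Inr e \<in> Inl ` X \<union> Inr ` Y \<longleftrightarrow> e \<in> Y" by auto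

lemma nb_l: "Inl v \<in> nbhd G z \<longleftrightarrow> Inl v \<in> verts G \<and> {z, Inl v} \<in> edges G \<and> z \<noteq> Inl v"
  by (simp add: nbhd_def)
lemma nb_r: "Inr v \<in> nbhd G z \<longleftrightarrow> Inr v \<in> verts G \<and> {z, Inr v} \<in> edges G \<and> z \<noteq> Inr v"
  by (simp add: nbhd_def)

lemma nb_Inl_A: assumes d: "A \<inter> B = {}" and u: "u \<in> A"
 shows "nbhd (total_graph (bip A B)) (Inl u) = Inl ` B \<union> Inr ` ((\<lambda>y. {u,y}) ` B)"
proof (rule set_eqI)
  fix z show "z \<in> nbhd (total_graph (bip A B)) (Inl u) \<longleftrightarrow> z \<in> Inl ` B \<union> Inr ` ((\<lambda>y. {u,y}) ` B)"
  proof (cases z)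
    case (Inl w)
    have "w \<in> B \<longleftrightarrow> w \<in> A \<union> B \<and> u \<noteq> w \<and> ((u\<in>A \<and> w\<in>B) \<or> (u\<in>B \<and> w\<in>A))"
      using d u by blast
    show ?thesis unfolding Inl nb_l TV memV_l bipV TL1 bipE2[OF d] using d u by blast
  next
    case (Inr e)
    have "(e \<in> {{x,y}|x y. x\<in>A \<and> y\<in>B} \<and> u \<in> e) \<longleftrightarrow> e \<in> (\<lambda>y. {u,y}) ` B"
    proof
      assume "e \<in> {{x,y}|x y. x\<in>A \<and> y\<in>B} \<and> u \<in> e"
      then obtain x y where "e = {x,y}" "x\<in>A" "y\<in>B" "u \<in> e" by blast
      moreover have "u \<noteq> y" using d u \<open>y\<in>B\<close> by blast
      ultimately have "e = {u,y}" "y \<in> B" by auto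
      then show "e \<in> (\<lambda>y. {u,y}) ` B" by blast
    next
      assume "e \<in> (\<lambda>y. {u,y}) ` B"
      then show "e \<in> {{x,y}|x y. x\<in>A \<and> y\<in>B} \<and> u \<in> e" using u by blast
    qed
    then show ?thesis unfolding Inr nb_r TV memV_r bipE TL2 sum.distinct by blast
  qed
qed

lemma nb_Inl_B: assumes d: "A \<inter> B = {}" and w: "w \<in> B"
 shows "nbhd (total_graph (bip A B)) (Inl w) = Inl ` A \<union> Inr ` ((\<lambda>x. {x,w}) ` A)"
proof (rule set_eqI)
  fix z show "z \<in> nbhd (total_graph (bip A B)) (Inl w) \<longleftrightarrow> z \<in> Inl ` A \<union> Inr ` ((\<lambda>x. {x,w}) ` A)"
  proof (cases z)
    case (Inl v)
    have "v \<in> A \<longleftrightarrow> v \<in> A \<union> B \<and> w \<noteq> v \<and> ((w\<in>A \<and> v\<in>B) \<or> (w\<in>B \<and> v\<in>A))"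
      using d w by blast
    show ?thesis unfolding Inl nb_l TV memV_l bipV TL1 bipE2[OF d] using d w by blast
  next
    case (Inr e)
    have "(e \<in> {{x,y}|x y. x\<in>A \<and> y\<in>B} \<and> w \<in> e) \<longleftrightarrow> e \<in> (\<lambda>x. {x,w}) ` A"
    proof
      assume "e \<in> {{x,y}|x y. x\<in>A \<and> y\<in>B} \<and> w \<in> e"
      then obtain x y where "e = {x,y}" "x\<in>A" "y\<in>B" "w \<in> e" by blast
      moreover have "w \<noteq> x" using d w \<open>x\<in>A\<close> by blast
      ultimately have "e = {x,w}" "x \<in> A" by auto
      then show "e \<in> (\<lambda>x. {x,w}) ` A" by blast
    next
      assume "e \<in> (\<lambda>x. {x,w}) ` A"
      then show "e \<in> {{x,y}|x y. x\<in>A \<and> y\<in>B} \<and> w \<in> e" using w by blast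
    qed
    then show ?thesis unfolding Inr nb_r TV memV_r bipE TL2 sum.distinct by blast
  qed
qed

lemma memI1: "Inr e \<in> {Inl a, Inl b} \<union> Inr ` U \<union> Inr ` W \<longleftrightarrow> e \<in> U \<union> W" by auto
lemma memI2: "Inl v \<in> {Inl a, Inl b} \<union> Inr ` U \<union> Inr ` W \<longleftrightarrow> v \<in> {a,b}" by auto
lemma nbrr: "Inr f \<in> nbhd (total_graph G) (Inr e) \<longleftrightarrow> f \<in> edges G \<and> e \<in> edges G \<and> e \<noteq> f \<and> e \<inter> f \<noteq> {}"
  by (auto simp: nb_r TV TL3)
lemma nbrl: "Inl v \<in> nbhd (total_graph G) (Inr e) \<longleftrightarrow> v \<in> verts G \<and> e \<in> edges G \<and> v \<in> e"
  by (auto simp: nb_l TV TL2')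

lemma nb_Inr: assumes d: "A \<inter> B = {}" and x: "x \<in> A" and y: "y \<in> B"
 shows "nbhd (total_graph (bip A B)) (Inr {x,y}) = {Inl x, Inl y} \<union> Inr ` ((\<lambda>y'. {x,y'}) ` (B - {y}))
    \<union> Inr ` ((\<lambda>x'. {x',y}) ` (A - {x}))"
proof (rule set_eqI)
  fix z show "z \<in> nbhd (total_graph (bip A B)) (Inr {x,y}) \<longleftrightarrow> z \<in> {Inl x, Inl y} \<union> Inr ` ((\<lambda>y'. {x,y'}) ` (B - {y}))
    \<union> Inr ` ((\<lambda>x'. {x',y}) ` (A - {x}))"
  proof (cases z)
    case (Inl v)
    have "{x,y} \<in> {{x,y}|x y. x\<in>A \<and> y\<in>B}" using x y by blast
    moreover have "v \<in> {x,y} \<Longrightarrow> v \<in> A \<union> B" using x y by blast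
    ultimately show ?thesis unfolding Inl nbrl memI2 bipV bipE by blast
  next
    case (Inr e)
    have xy: "x \<noteq> y" using d x y by blast
    have "(e \<in> {{x,y}|x y. x\<in>A \<and> y\<in>B} \<and> {x,y} \<noteq> e \<and> {x,y} \<inter> e \<noteq> {})
        \<longleftrightarrow> e \<in> (\<lambda>y'. {x,y'}) ` (B - {y}) \<union> (\<lambda>x'. {x',y}) ` (A - {x})"
    proof
      assume "e \<in> {{x,y}|x y. x\<in>A \<and> y\<in>B} \<and> {x,y} \<noteq> e \<and> {x,y} \<inter> e \<noteq> {}"
      then obtain a b where e: "e = {a,b}" "a\<in>A" "b\<in>B" "{x,y} \<noteq> e" "{x,y} \<inter> e \<noteq> {}" by blast
      have "a \<noteq> y" "b \<noteq> x" using d x y e by blast+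
      then have "(a = x \<and> b \<noteq> y) \<or> (b = y \<and> a \<noteq> x)" using e by auto
      then show "e \<in> (\<lambda>y'. {x,y'}) ` (B - {y}) \<union> (\<lambda>x'. {x',y}) ` (A - {x})" using e by blast
    next
      assume "e \<in> (\<lambda>y'. {x,y'}) ` (B - {y}) \<union> (\<lambda>x'. {x',y}) ` (A - {x})"
      then consider b where "e = {x,b}" "b \<in> B" "b \<noteq> y" | a where "e = {a,y}" "a \<in> A" "a \<noteq> x" by blast
      then show "e \<in> {{x,y}|x y. x\<in>A \<and> y\<in>B} \<and> {x,y} \<noteq> e \<and> {x,y} \<inter> e \<noteq> {}"
      proof cases
        case 1 then show ?thesis using x xy by (auto simp: doubleton_eq_iff)
      next
        case 2 then show ?thesis using y xy by (auto simp: doubleton_eq_iff)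
      qed
    qed
    moreover have "{x,y} \<in> {{x,y}|x y. x\<in>A \<and> y\<in>B}" using x y by blast
    ultimately show ?thesis unfolding Inr nbrr memI1 bipE by (simp only: simp_thms)
  qed
qed

lemma CL: fixes X :: "'a set" and Y :: "'b set" assumes "finite X" "finite Y"
  shows "card ((Inl ` X \<union> Inr ` Y) \<inter> P) = card {x\<in>X. Inl x \<in> P} + card {y\<in>Y. Inr y \<in> P}"
proof -
  have e: "(Inl ` X \<union> Inr ` Y) \<inter> P = Inl ` {x\<in>X. Inl x \<in> P} \<union> Inr ` {y\<in>Y. Inr y \<in> P}" by auto
  have "card (Inl ` {x\<in>X. Inl x \<in> P} \<union> Inr ` {y\<in>Y. Inr y \<in> P})
     = card (Inl ` {x\<in>X. Inl x \<in> P} :: ('a+'b) set) + card (Inr ` {y\<in>Y. Inr y \<in> P} :: ('a+'b) set)"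
    using assms by (intro card_Un_disjoint) auto
  moreover have "card (Inl ` {x\<in>X. Inl x \<in> P} :: ('a+'b) set) = card {x\<in>X. Inl x \<in> P}"
    by (rule card_image) (auto simp: inj_on_def)
  moreover have "card (Inr ` {y\<in>Y. Inr y \<in> P} :: ('a+'b) set) = card {y\<in>Y. Inr y \<in> P}"
    by (rule card_image) (auto simp: inj_on_def)
  ultimately show ?thesis using e by simp
qed

lemma CL2: assumes "inj_on g Y"
  shows "card {e\<in>g ` Y. Q e} = card {y\<in>Y. Q (g y)}"
proof -
  have "{e\<in>g ` Y. Q e} = g ` {y\<in>Y. Q (g y)}" by auto
  moreover have "inj_on g {y\<in>Y. Q (g y)}" using assms by (auto simp: inj_on_def)
  ultimately show ?thesis by (simp add: card_image)
qed

lemma CL3: assumes "finite U1" "finite U2" "U1 \<inter> U2 = {}"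
  shows "card {e\<in>U1 \<union> U2. Q e} = card {e\<in>U1. Q e} + card {e\<in>U2. Q e}"
proof -
  have "{e\<in>U1 \<union> U2. Q e} = {e\<in>U1. Q e} \<union> {e\<in>U2. Q e}" by auto
  then show ?thesis using assms by (simp add: card_Un_disjoint disjoint_iff)
qed

lemma CDiff: assumes "finite B" "y \<in> B"
  shows "card {z\<in>B - {y}. Q z} = card {z\<in>B. Q z} - (if Q y then 1 else 0)"
proof -
  have "{z\<in>B - {y}. Q z} = {z\<in>B. Q z} - {y}" by auto
  then show ?thesis using assms by (simp add: card_Diff_singleton_if)
qed

lemma injL: "u \<notin> X \<Longrightarrow> inj_on (\<lambda>y. {u,y}) X" by (auto simp: inj_on_def doubleton_eq_iff)
lemma injR: "u \<notin> X \<Longrightarrow> inj_on (\<lambda>y. {y,u}) X" by (auto simp: inj_on_def doubleton_eq_iff)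

lemma pairmem: assumes "A \<inter> B = {}" "x\<in>A" "y\<in>B"
  shows "{x,y} \<in> {{a,b}|a b. a\<in>A \<and> b\<in>B \<and> c b = c a} \<longleftrightarrow> c y = c x"
proof
  assume "{x,y} \<in> {{a,b}|a b. a\<in>A \<and> b\<in>B \<and> c b = c a}"
  then obtain a b where h: "{x,y} = {a,b}" "a\<in>A" "b\<in>B" "c b = c a" by blast
  from h(1) have "(x=a \<and> y=b) \<or> (x=b \<and> y=a)" by (simp add: doubleton_eq_iff)
  then show "c y = c x" using h assms by blast
next
  assume "c y = c x" then show "{x,y} \<in> {{a,b}|a b. a\<in>A \<and> b\<in>B \<and> c b = c a}" using assms by blast
qed

lemma bip_vce:
  fixes A B :: "'a set" and c :: "'a \<Rightarrow> bool"
  assumes fA: "finite A" and fB: "finite B" and disj: "A \<inter> B = {}"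
    and hA: "\<And>t. card {x\<in>A. c x = t} = card {x\<in>A. c x \<noteq> t}"
    and hB: "\<And>t. card {x\<in>B. c x = t} = card {x\<in>B. c x \<noteq> t}"
    and eA: "\<And>t. \<exists>x\<in>A. c x = t" and eB: "\<And>t. \<exists>x\<in>B. c x = t"
  shows "very_cost_effective_graph (total_graph (bip A B))"
proof -
  define T where "T = total_graph (bip A B)"
  define S where "S = Inl ` A \<union> Inr ` {{x,y}|x y. x\<in>A \<and> y\<in>B \<and> c y = c x}"
  define V where "V = verts T"
  have VT: "V = Inl ` (A\<union>B) \<union> Inr ` {{x,y}|x y. x\<in>A \<and> y\<in>B}"
    by (simp add: V_def T_def TV bipV bipE)
  have SV: "S \<subseteq> V" unfolding VT S_def by auto
  have memSl: "\<And>u. Inl u \<in> S \<longleftrightarrow> u\<in>A" unfolding S_def by (rule memV_l)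
  have memSr: "\<And>x y. x\<in>A \<Longrightarrow> y\<in>B \<Longrightarrow> Inr {x,y} \<in> S \<longleftrightarrow> c y = c x"
    unfolding S_def memV_r using disj by (rule pairmem)
  have memSr2: "\<And>x y. x\<in>A \<Longrightarrow> y\<in>B \<Longrightarrow> Inr {x,y} \<in> S \<longleftrightarrow> c x = c y"
    using memSr by auto
  have NV: "\<And>v. nbhd T v \<subseteq> V" by (auto simp: nbhd_def V_def)
  have kA: "\<And>t. card {x\<in>A. c x = t} \<ge> 1"
  proof -
    fix t obtain x where "x\<in>A" "c x = t" using eA by blast
    then have "{x\<in>A. c x = t} \<noteq> {}" by auto
    then show "card {x\<in>A. c x = t} \<ge> 1" using fA by (simp add: Suc_le_eq card_gt_0_iff)
  qed
  have kB: "\<And>t. card {x\<in>B. c x = t} \<ge> 1"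
  proof -
    fix t obtain x where "x\<in>B" "c x = t" using eB by blast
    then have "{x\<in>B. c x = t} \<noteq> {}" by auto
    then show "card {x\<in>B. c x = t} \<ge> 1" using fB by (simp add: Suc_le_eq card_gt_0_iff)
  qed
  have cntA: "\<And>u P. u\<in>A \<Longrightarrow> card (nbhd T (Inl u) \<inter> P) = card {w\<in>B. Inl w\<in>P} + card {y\<in>B. Inr {u,y}\<in>P}"
  proof -
    fix u P assume u: "u\<in>A"
    have "card (nbhd T (Inl u) \<inter> P) = card {w\<in>B. Inl w\<in>P} + card {e\<in>(\<lambda>y. {u,y}) ` B. Inr e\<in>P}"
      unfolding T_def nb_Inl_A[OF disj u] using fB by (intro CL) auto
    also have "card {e\<in>(\<lambda>y. {u,y}) ` B. Inr e\<in>P} = card {y\<in>B. Inr {u,y}\<in>P}"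
      by (rule CL2) (use u disj in \<open>auto intro: injL\<close>)
    finally show "card (nbhd T (Inl u) \<inter> P) = card {w\<in>B. Inl w\<in>P} + card {y\<in>B. Inr {u,y}\<in>P}" .
  qed
  have cntB: "\<And>w P. w\<in>B \<Longrightarrow> card (nbhd T (Inl w) \<inter> P) = card {x\<in>A. Inl x\<in>P} + card {x\<in>A. Inr {x,w}\<in>P}"
  proof -
    fix w P assume w: "w\<in>B"
    have "card (nbhd T (Inl w) \<inter> P) = card {x\<in>A. Inl x\<in>P} + card {e\<in>(\<lambda>x. {x,w}) ` A. Inr e\<in>P}"
      unfolding T_def nb_Inl_B[OF disj w] using fA by (intro CL) auto
    also have "card {e\<in>(\<lambda>x. {x,w}) ` A. Inr e\<in>P} = card {x\<in>A. Inr {x,w}\<in>P}"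
      by (rule CL2) (use w disj in \<open>auto intro: injR\<close>)
    finally show "card (nbhd T (Inl w) \<inter> P) = card {x\<in>A. Inl x\<in>P} + card {x\<in>A. Inr {x,w}\<in>P}" .
  qed
  have cntE: "\<And>x y P. x\<in>A \<Longrightarrow> y\<in>B \<Longrightarrow> card (nbhd T (Inr {x,y}) \<inter> P) =
      card {v\<in>{x,y}. Inl v \<in> P} + (card {y'\<in>B-{y}. Inr {x,y'}\<in>P} + card {x'\<in>A-{x}. Inr {x',y}\<in>P})"
  proof -
    fix x y P assume x: "x\<in>A" and y: "y\<in>B"
    have "nbhd T (Inr {x,y}) = Inl ` {x,y} \<union> Inr ` ((\<lambda>y'. {x,y'}) ` (B - {y}) \<union> (\<lambda>x'. {x',y}) ` (A - {x}))"
      unfolding T_def nb_Inr[OF disj x y] by auto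
    then have "card (nbhd T (Inr {x,y}) \<inter> P) = card {v\<in>{x,y}. Inl v \<in> P}
        + card {e\<in>(\<lambda>y'. {x,y'}) ` (B - {y}) \<union> (\<lambda>x'. {x',y}) ` (A - {x}). Inr e \<in> P}"
      by (simp only:) (rule CL, simp, use fA fB in simp)
    also have "card {e\<in>(\<lambda>y'. {x,y'}) ` (B - {y}) \<union> (\<lambda>x'. {x',y}) ` (A - {x}). Inr e \<in> P}
       = card {e\<in>(\<lambda>y'. {x,y'}) ` (B - {y}). Inr e \<in> P} + card {e\<in>(\<lambda>x'. {x',y}) ` (A - {x}). Inr e \<in> P}"
      using fA fB disj x y by (intro CL3) (auto simp: doubleton_eq_iff)
    also have "card {e\<in>(\<lambda>y'. {x,y'}) ` (B - {y}). Inr e \<in> P} = card {y'\<in>B-{y}. Inr {x,y'}\<in>P}"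
      by (rule CL2) (use x disj in \<open>auto intro: injL\<close>)
    also have "card {e\<in>(\<lambda>x'. {x',y}) ` (A - {x}). Inr e \<in> P} = card {x'\<in>A-{x}. Inr {x',y}\<in>P}"
      by (rule CL2) (use y disj in \<open>auto intro: injR\<close>)
    finally show "card (nbhd T (Inr {x,y}) \<inter> P) =
      card {v\<in>{x,y}. Inl v \<in> P} + (card {y'\<in>B-{y}. Inr {x,y'}\<in>P} + card {x'\<in>A-{x}. Inr {x',y}\<in>P})" .
  qed
  have main: "\<And>v. v \<in> V \<Longrightarrow> (v\<in>S \<longrightarrow> card (nbhd T v \<inter> S) < card (nbhd T v \<inter> -S))
      \<and> (v\<notin>S \<longrightarrow> card (nbhd T v \<inter> -S) < card (nbhd T v \<inter> S))"
  proof -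
    fix v assume "v \<in> V"
    then consider (a) u where "v = Inl u" "u\<in>A" | (b) w where "v = Inl w" "w\<in>B"
      | (e) x y where "v = Inr {x,y}" "x\<in>A" "y\<in>B" unfolding VT by blast
    then show "(v\<in>S \<longrightarrow> card (nbhd T v \<inter> S) < card (nbhd T v \<inter> -S))
      \<and> (v\<notin>S \<longrightarrow> card (nbhd T v \<inter> -S) < card (nbhd T v \<inter> S))"
    proof cases
      case a
      have s1: "{w\<in>B. Inl w \<in> S} = {}" using disj memSl by auto
      have s2: "{y\<in>B. Inr{u,y} \<in> S} = {y\<in>B. c y = c u}" using memSr a by auto
      have s3: "{w\<in>B. Inl w \<in> -S} = B" using disj memSl by auto
      have s4: "{y\<in>B. Inr{u,y} \<in> -S} = {y\<in>B. c y \<noteq> c u}" using memSr a by auto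
      have "card {y\<in>B. c y = c u} \<le> card B" using fB by (intro card_mono) auto
      moreover have "card {y\<in>B. c y \<noteq> c u} \<ge> 1" using kB hB by metis
      moreover have "v \<in> S" using a memSl by simp
      moreover have "card (nbhd T v \<inter> S) = card {y\<in>B. c y = c u}"
        unfolding a(1) cntA[OF a(2), of S] s1 s2 by simp
      moreover have "card (nbhd T v \<inter> -S) = card B + card {y\<in>B. c y \<noteq> c u}"
        unfolding a(1) cntA[OF a(2), of "-S"] s3 s4 by simp
      ultimately show ?thesis by simp
    next
      case b
      have s1: "{x\<in>A. Inl x \<in> S} = A" using disj memSl by auto
      have s2: "{x\<in>A. Inr{x,w} \<in> S} = {x\<in>A. c x = c w}" using memSr b by auto
      have s3: "{x\<in>A. Inl x \<in> -S} = {}" using disj memSl by auto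
      have s4: "{x\<in>A. Inr{x,w} \<in> -S} = {x\<in>A. c x \<noteq> c w}" using memSr b by auto
      have "card {x\<in>A. c x \<noteq> c w} \<le> card A" using fA by (intro card_mono) auto
      moreover have "card {x\<in>A. c x = c w} \<ge> 1" using kA by metis
      moreover have "v \<notin> S" using b memSl disj by auto
      moreover have "card (nbhd T v \<inter> S) = card A + card {x\<in>A. c x = c w}"
        unfolding b(1) cntB[OF b(2), of S] s1 s2 by simp
      moreover have "card (nbhd T v \<inter> -S) = card {x\<in>A. c x \<noteq> c w}"
        unfolding b(1) cntB[OF b(2), of "-S"] s3 s4 by simp
      ultimately show ?thesis by simp
    next
      case e
      have i1: "{v\<in>{x,y}. Inl v \<in> S} = {x}" using disj memSl e by auto
      have i2: "{v\<in>{x,y}. Inl v \<in> -S} = {y}" using disj memSl e by auto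
      have j1: "{y'\<in>B-{y}. Inr {x,y'}\<in>S} = {z\<in>B-{y}. c z = c x}" using memSr e by auto
      have j2: "{y'\<in>B-{y}. Inr {x,y'}\<in>-S} = {z\<in>B-{y}. c z \<noteq> c x}" using memSr e by auto
      have l1: "{x'\<in>A-{x}. Inr {x',y}\<in>S} = {z\<in>A-{x}. c z = c y}" using memSr2 e by auto
      have l2: "{x'\<in>A-{x}. Inr {x',y}\<in>-S} = {z\<in>A-{x}. c z \<noteq> c y}" using memSr2 e by auto
      have cS: "card (nbhd T v \<inter> S) = 1 + (card {z\<in>B-{y}. c z = c x} + card {z\<in>A-{x}. c z = c y})"
        unfolding e(1) cntE[OF e(2,3), of S] i1 j1 l1 by simp
      have cN: "card (nbhd T v \<inter> -S) = 1 + (card {z\<in>B-{y}. c z \<noteq> c x} + card {z\<in>A-{x}. c z \<noteq> c y})"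
        unfolding e(1) cntE[OF e(2,3), of "-S"] i2 j2 l2 by simp
      have d1: "card {z\<in>B-{y}. c z = c x} = card {z\<in>B. c z = c x} - (if c y = c x then 1 else 0)"
        using CDiff[OF fB e(3)] .
      have d2: "card {z\<in>B-{y}. c z \<noteq> c x} = card {z\<in>B. c z \<noteq> c x} - (if c y \<noteq> c x then 1 else 0)"
        using CDiff[OF fB e(3)] .
      have d3: "card {z\<in>A-{x}. c z = c y} = card {z\<in>A. c z = c y} - (if c x = c y then 1 else 0)"
        using CDiff[OF fA e(2)] .
      have d4: "card {z\<in>A-{x}. c z \<noteq> c y} = card {z\<in>A. c z \<noteq> c y} - (if c x \<noteq> c y then 1 else 0)"
        using CDiff[OF fA e(2)] .
      have vS: "v \<in> S \<longleftrightarrow> c y = c x" using memSr e by simp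
      show ?thesis
      proof (cases "c y = c x")
        case True
        have "card {z\<in>B. c z \<noteq> c x} = card {z\<in>B. c z = c x}" using hB by metis
        moreover have "card {z\<in>A. c z \<noteq> c y} = card {z\<in>A. c z = c y}" using hA by metis
        moreover have "card {z\<in>B. c z = c x} \<ge> 1" "card {z\<in>A. c z = c y} \<ge> 1" using kA kB by auto
        ultimately show ?thesis using True cS cN d1 d2 d3 d4 vS by simp
      next
        case False
        have "card {z\<in>B. c z \<noteq> c x} = card {z\<in>B. c z = c x}" using hB by metis
        moreover have "card {z\<in>A. c z \<noteq> c y} = card {z\<in>A. c z = c y}" using hA by metis
        moreover have "card {z\<in>B. c z = c x} \<ge> 1" "card {z\<in>A. c z = c y} \<ge> 1" using kA kB by auto
        ultimately show ?thesis using False cS cN d1 d2 d3 d4 vS by auto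
      qed
    qed
  qed
  have I1: "\<And>v. nbhd T v \<inter> (V - S) = nbhd T v \<inter> -S" using NV by blast
  have I2: "V - (V - S) = S" using SV by blast
  have "very_cost_effective_bipartition T S"
    unfolding very_cost_effective_bipartition_def very_cost_effective_set_def very_cost_effective_vertex_def
      V_def[symmetric] I1 I2
    using SV main by auto
  then show ?thesis unfolding very_cost_effective_graph_def T_def by blast
qed

lemma parity_half: assumes "odd (q::nat)"
  shows "card {k\<in>{1..<q}. even k} = card {k\<in>{1..<q}. odd k}"
proof -
  have "{k\<in>{1..<q}. even k} = Suc ` {k\<in>{1..<q}. odd k}"
  proof (rule set_eqI)
    fix j show "j \<in> {k\<in>{1..<q}. even k} \<longleftrightarrow> j \<in> Suc ` {k\<in>{1..<q}. odd k}"
    proof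
      assume j: "j \<in> {k\<in>{1..<q}. even k}"
      then have "j = Suc (j - 1)" "j - 1 \<in> {k\<in>{1..<q}. odd k}" by (auto elim!: evenE)
      then show "j \<in> Suc ` {k\<in>{1..<q}. odd k}" by blast
    next
      assume "j \<in> Suc ` {k\<in>{1..<q}. odd k}"
      then obtain k where "j = Suc k" "1 \<le> k" "k < q" "odd k" by auto
      moreover have "Suc k \<noteq> q" using \<open>odd k\<close> assms by auto
      ultimately show "j \<in> {k\<in>{1..<q}. even k}" by auto
    qed
  qed
  then show ?thesis by (simp add: card_image)
qed

definition M :: "nat \<Rightarrow> nat \<Rightarrow> nat set" where "M p q = {x. 0 < x \<and> x < p*q \<and> p dvd x}"

lemma M_image: assumes "0 < p" shows "M p q = (\<lambda>k. k*p) ` {1..<q}"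
proof (rule set_eqI)
  fix x show "x \<in> M p q \<longleftrightarrow> x \<in> (\<lambda>k. k*p) ` {1..<q}"
  proof
    assume h: "x \<in> M p q"
    then have "p dvd x" "0 < x" "x < p*q" unfolding M_def by simp_all
    then obtain k where k: "x = p*k" by (elim dvdE)
    have "0 < k" using k \<open>0 < x\<close> by (cases k) simp_all
    moreover have "k < q" using k \<open>x < p*q\<close> assms by simp
    moreover have "x = k*p" using k by (simp add: mult.commute)
    ultimately have "k \<in> {1..<q}" "x = k*p" by simp_all
    then show "x \<in> (\<lambda>k. k*p) ` {1..<q}" by blast
  next
    assume "x \<in> (\<lambda>k. k*p) ` {1..<q}"
    then obtain k where k0: "k \<in> {1..<q}" "x = k*p" by (rule imageE) simp
    then have k: "x = k*p" "1 \<le> k" "k < q" by simp_all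
    have "0 < x" using k assms by simp
    moreover have "x < p*q"
    proof -
      have "k*p < q*p" using k(3) assms by (rule mult_strict_right_mono)
      then show ?thesis unfolding k(1) mult.commute[of p q] .
    qed
    moreover have "p dvd x" using k by simp
    ultimately show "x \<in> M p q" unfolding M_def by simp
  qed
qed

lemma imgfilter: "{x \<in> f ` S. Q x} = f ` {k \<in> S. Q (f k)}" by blast

lemma M_half: assumes "odd p" "odd q"
  shows "card {x\<in>M p q. even x = t} = card {x\<in>M p q. even x \<noteq> t}"
proof -
  have p: "0 < p" using assms by (simp add: odd_pos)
  have inj: "inj_on (\<lambda>k. k*p) X" for X using p by (simp add: inj_on_def)
  have e: "card {x\<in>M p q. Q x} = card {k\<in>{1..<q}. Q (k*p)}" for Q
    unfolding M_image[OF p] imgfilter using inj by (simp add: card_image)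
  have ev: "even (k*p) \<longleftrightarrow> even k" for k using assms by simp
  have ph: "card {k\<in>{1..<q}. even k} = card {k\<in>{1..<q}. odd k}" using parity_half[OF assms(2)] .
  show ?thesis
  proof (cases t)
    case True then show ?thesis unfolding e ev using ph by simp
  next
    case False then show ?thesis unfolding e ev using ph by simp
  qed
qed

lemma zdg: fixes p q :: nat
  assumes pp: "prime p" and pq: "prime q" and "3 \<le> p" and "3 \<le> q" and "p \<noteq> q"
  shows "zero_divisor_graph (p * q) = bip (M p q) (M q p)"
proof -
  have cop: "coprime p q" using pp pq assms(5) by (simp add: primes_coprime)
  have nd: "\<not> (p dvd x \<and> q dvd x)" if "0 < x" "x < p*q" for x
  proof
    assume "p dvd x \<and> q dvd x"
    then have "p*q dvd x" using cop by (auto intro: divides_mult)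
    then show False using that by (auto dest: dvd_imp_le)
  qed
  have Mq: "M q p = {x. 0 < x \<and> x < p*q \<and> q dvd x}" by (simp add: M_def mult.commute)
  have disj: "M p q \<inter> M q p = {}" using nd unfolding Mq by (auto simp: M_def)
  have zd: "zd_verts (p*q) = M p q \<union> M q p"
  proof (rule set_eqI)
    fix x show "x \<in> zd_verts (p*q) \<longleftrightarrow> x \<in> M p q \<union> M q p"
    proof
      assume "x \<in> zd_verts (p*q)"
      then obtain y where x: "0 < x" "x < p*q" and y: "0 < y" "y < p*q" and d: "p*q dvd x*y"
        unfolding zd_verts_def by (auto simp: mod_eq_0_iff_dvd)
      have "p dvd x*y" "q dvd x*y" using d by (auto intro: dvd_mult_left dvd_mult_right)
      then have "p dvd x \<or> p dvd y" "q dvd x \<or> q dvd y" using pp pq by (auto simp: prime_dvd_mult_iff)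
      then have "p dvd x \<or> q dvd x" using nd[OF y] by blast
      then show "x \<in> M p q \<union> M q p" using x unfolding Mq by (auto simp: M_def)
    next
      assume "x \<in> M p q \<union> M q p"
      then consider "0 < x" "x < p*q" "p dvd x" | "0 < x" "x < p*q" "q dvd x" unfolding Mq M_def by auto
      then show "x \<in> zd_verts (p*q)"
      proof cases
        case 1
        have "q < p*q" using assms by simp
        moreover have "(x*q) mod (p*q) = 0" using 1 by (auto simp: mod_eq_0_iff_dvd)
        ultimately show ?thesis using 1 assms unfolding zd_verts_def by (intro CollectI conjI exI[of _ q]) auto
      next
        case 2
        have "p < p*q" using assms by simp
        moreover have "(x*p) mod (p*q) = 0" using 2 by (auto simp: mod_eq_0_iff_dvd)
        ultimately show ?thesis using 2 assms unfolding zd_verts_def by (intro CollectI conjI exI[of _ p]) auto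
      qed
    qed
  qed
  have adj: "x \<noteq> y \<and> (x*y) mod (p*q) = 0 \<longleftrightarrow> (x \<in> M p q \<and> y \<in> M q p) \<or> (x \<in> M q p \<and> y \<in> M p q)"
    if "x \<in> M p q \<union> M q p" "y \<in> M p q \<union> M q p" for x y
  proof
    assume h: "x \<noteq> y \<and> (x*y) mod (p*q) = 0"
    then have "p dvd x*y" "q dvd x*y" by (auto simp: mod_eq_0_iff_dvd intro: dvd_mult_left dvd_mult_right)
    then have "p dvd x \<or> p dvd y" "q dvd x \<or> q dvd y" using pp pq by (auto simp: prime_dvd_mult_iff)
    moreover have "x \<in> M p q \<longleftrightarrow> p dvd x" "x \<in> M q p \<longleftrightarrow> q dvd x"
      "y \<in> M p q \<longleftrightarrow> p dvd y" "y \<in> M q p \<longleftrightarrow> q dvd y"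
      using that unfolding Mq M_def by auto
    moreover have "x \<notin> M p q \<inter> M q p" "y \<notin> M p q \<inter> M q p" using disj by auto
    ultimately show "(x \<in> M p q \<and> y \<in> M q p) \<or> (x \<in> M q p \<and> y \<in> M p q)" by blast
  next
    assume "(x \<in> M p q \<and> y \<in> M q p) \<or> (x \<in> M q p \<and> y \<in> M p q)"
    moreover have "x \<in> M p q \<Longrightarrow> p dvd x" "x \<in> M q p \<Longrightarrow> q dvd x"
      "y \<in> M p q \<Longrightarrow> p dvd y" "y \<in> M q p \<Longrightarrow> q dvd y" unfolding M_def by auto
    ultimately have xy: "x \<noteq> y" and c: "(p dvd x \<and> q dvd y) \<or> (q dvd x \<and> p dvd y)" using disj by blast+
    have "p*q dvd x*y"
    proof (cases "p dvd x \<and> q dvd y")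
      case True then show ?thesis by (simp add: mult_dvd_mono)
    next
      case False then have "p dvd y" "q dvd x" using c by auto
      then have "p*q dvd y*x" by (simp add: mult_dvd_mono)
      then show ?thesis by (simp add: mult.commute)
    qed
    note xy this
    then show "x \<noteq> y \<and> (x*y) mod (p*q) = 0" by (simp add: mod_eq_0_iff_dvd)
  qed
  have ed: "{{x, y} | x y. x \<in> zd_verts (p*q) \<and> y \<in> zd_verts (p*q) \<and> x \<noteq> y \<and> (x * y) mod (p*q) = 0}
      = {{x,y}|x y. x\<in>M p q \<and> y\<in>M q p}" (is "?L = ?R")
  proof (rule set_eqI)
    fix e show "e \<in> ?L \<longleftrightarrow> e \<in> ?R"
    proof
      assume "e \<in> ?L"
      then have "\<exists>x y. e = {x,y} \<and> x \<in> zd_verts (p*q) \<and> y \<in> zd_verts (p*q) \<and> x \<noteq> y \<and> (x * y) mod (p*q) = 0"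
        by (simp only: mem_Collect_eq)
      then obtain x y where exy: "e = {x,y} \<and> x \<in> zd_verts (p*q) \<and> y \<in> zd_verts (p*q) \<and> x \<noteq> y \<and> (x * y) mod (p*q) = 0"
        by (elim exE)
      have e: "e = {x,y}" using exy by (elim conjE) assumption
      have x0: "x \<in> zd_verts (p*q)" using exy by (elim conjE) assumption
      have y0: "y \<in> zd_verts (p*q)" using exy by (elim conjE) assumption
      have c: "x \<noteq> y \<and> (x * y) mod (p*q) = 0" using exy by (elim conjE) (rule conjI)
      have xy: "x \<in> M p q \<union> M q p" "y \<in> M p q \<union> M q p" using x0 y0 zd by simp_all
      from adj[OF xy] c have "(x \<in> M p q \<and> y \<in> M q p) \<or> (x \<in> M q p \<and> y \<in> M p q)" by blast
      then show "e \<in> ?R"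
      proof
        assume "x \<in> M p q \<and> y \<in> M q p" then show "e \<in> ?R" using e by blast
      next
        assume "x \<in> M q p \<and> y \<in> M p q"
        moreover have "e = {y,x}" using e by (simp add: insert_commute)
        ultimately show "e \<in> ?R" by blast
      qed
    next
      assume "e \<in> ?R"
      then have "\<exists>x y. e = {x,y} \<and> x\<in>M p q \<and> y\<in>M q p" by (simp only: mem_Collect_eq)
      then obtain x y where exy: "e = {x,y} \<and> x\<in>M p q \<and> y\<in>M q p" by (elim exE)
      have e: "e = {x,y}" using exy by (elim conjE) assumption
      have xy1: "x\<in>M p q" using exy by (elim conjE) assumption
      have xy2: "y\<in>M q p" using exy by (elim conjE) assumption
      note xy = xy1 xy2
      have xy': "x \<in> M p q \<union> M q p" "y \<in> M p q \<union> M q p" using xy by simp_all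
      have c: "x \<noteq> y \<and> (x * y) mod (p*q) = 0" using adj[OF xy'] xy by blast
      have xz: "x \<in> zd_verts (p*q)" "y \<in> zd_verts (p*q)" using xy' zd by simp_all
      show "e \<in> ?L" unfolding mem_Collect_eq
        by (rule exI[of _ x], rule exI[of _ y]) (simp only: e xz c simp_thms)
    qed
  qed
  show ?thesis unfolding zero_divisor_graph_def bip_def ed unfolding zd ..
qed

theorem mainTheorem9:
  fixes p q :: nat
  assumes "prime p" and "prime q" and "3 \<le> p" and "3 \<le> q" and "p < q"
  shows "very_cost_effective_graph (total_graph (zero_divisor_graph (p * q)))"
proof -
  have op: "odd p" "odd q" using prime_odd_nat[OF assms(1)] prime_odd_nat[OF assms(2)] assms by auto
  have fin: "finite (M a b)" for a b unfolding M_def by (rule finite_subset[of _ "{..<a*b}"]) auto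
  have ex: "\<exists>x\<in>M a b. even x = t" if "3 \<le> a" "3 \<le> b" "odd a" for a b t
  proof (cases t)
    case True
    have "2*a \<in> M a b" using that unfolding M_def by auto
    then show ?thesis using True by (intro bexI[of _ "2*a"]) auto
  next
    case False
    have "a \<in> M a b" using that unfolding M_def by auto
    then show ?thesis using False that by (intro bexI[of _ a]) auto
  qed
  have z: "zero_divisor_graph (p*q) = bip (M p q) (M q p)" using zdg assms by simp
  have disj: "M p q \<inter> M q p = {}"
  proof -
    have cop: "coprime p q" using assms by (simp add: primes_coprime)
    show ?thesis
    proof (rule ccontr)
      assume "M p q \<inter> M q p \<noteq> {}"
      then obtain x where "0 < x" "x < p*q" "p dvd x" "q dvd x" by (auto simp: M_def mult.commute)
      moreover have "p*q dvd x" using cop calculation by (auto intro: divides_mult)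
      ultimately show False by (auto dest: dvd_imp_le)
    qed
  qed
  show ?thesis unfolding z
    by (rule bip_vce[where c = even]) (use fin disj M_half[OF op] M_half[OF op(2) op(1)] ex assms op in auto)
qed
end
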